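(* For every integer $n\ge1$, $$\int_2^\infty F_n(w)\,dw\le n.$$
   Context: For $w>0$ and integer $n\ge1$ let $a_n(w)=\sum_{j=0}^n w^j$, $b_n(w)=\sum_{j=1}^n jw^j$, $c_n(w)=\sum_{j=0}^n j^2w^j$, and $$F_n(w)=\frac{1}{2\sqrt{w}}\sqrt{\frac{c_n(w)}{a_n(w)}}\sqrt{\frac{a_n(w)c_n(w)-b_n(w)^2}{w\,a_n(w)^2}}.$$ *)

theory Defs
  imports "HOL-Analysis.Analysis"
begin

definition a_n :: "nat \<Rightarrow> real \<Rightarrow> real" where
  "a_n n w = (\<Sum>j=0..n. w ^ j)"

definition b_n :: "nat \<Rightarrow> real \<Rightarrow> real" where
  "b_n n w = (\<Sum>j=1..n. real j * w ^ j)"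

definition c_n :: "nat \<Rightarrow> real \<Rightarrow> real" where
  "c_n n w = (\<Sum>j=0..n. (real j)^2 * w ^ j)"

definition F_n :: "nat \<Rightarrow> real \<Rightarrow> real" where
  "F_n n w = 1 / (2 * sqrt w) * sqrt (c_n n w / a_n n w)
     * sqrt ((a_n n w * c_n n w - (b_n n w)^2) / (w * (a_n n w)^2))"

end

theory Submission
  imports Defs
begin




lemma A_closed: "(w-1) * a_n n w = w^(n+1) - 1"
  unfolding a_n_def by (induction n) (auto simp: algebra_simps)

lemma B_closed: "(w-1)^2 * b_n n w = real n * w^(n+2) - (real n+1) * w^(n+1) + w"
  unfolding b_n_def by (induction n) (auto simp: algebra_simps power2_eq_square)

lemma C_closed: "(w-1)^3 * c_n n w = w^(n+1) * ((real n)^2*w^2 - (2*(real n)^2+2*real n-1)*w + (real n+1)^2) - w - w^2"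
  unfolding c_n_def by (induction n) (auto simp: algebra_simps power2_eq_square power3_eq_cube)


lemma b_n_0: "b_n n w = (\<Sum>j=0..n. real j * w ^ j)"
proof -
  have "{0..n} = insert 0 {1..n}" by auto
  thus ?thesis unfolding b_n_def by simp
qed

lemma key_poly:
  fixes w :: real and n :: nat
  assumes w: "w > 1" and n: "n \<ge> 1"
  shows "(w-1)^3 * ((real n)^2 * a_n n w - 2 * real n * b_n n w + c_n n w) \<le> w^2 * a_n n w"
proof -
  define X where "X = w^(n+1)"
  define Q where "Q = (real n+1)^2*w^2 - (2*(real n)^2+2*real n-1)*w + (real n)^2"
  have "(w-1)^3 * ((real n)^2 * a_n n w - 2 * real n * b_n n w + c_n n w)
      = (real n)^2 * (w-1)^2 * ((w-1) * a_n n w) - 2 * real n * (w-1) * ((w-1)^2 * b_n n w) + (w-1)^3 * c_n n w"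
    by (simp add: algebra_simps power2_eq_square power3_eq_cube)
  also have "\<dots> = X * (w+1) - Q"
    unfolding A_closed B_closed C_closed X_def Q_def
    by (simp add: algebra_simps power2_eq_square power3_eq_cube)
  finally have eq: "(w-1)^3 * ((real n)^2 * a_n n w - 2 * real n * b_n n w + c_n n w) = X * (w+1) - Q" .
  have Qnn: "Q \<ge> 0"
  proof -
    have "Q = (real n)^2 * (w-1)^2 + (2*real n+1) * w * (w - 1) + 2 * w"
      unfolding Q_def by (simp add: algebra_simps power2_eq_square)
    thus ?thesis using w by (simp add: add_nonneg_nonneg)
  qed
  have Xge: "X \<ge> w^2"
    unfolding X_def using w n by (intro power_increasing) auto
  have "(w-1) * (X * (w+1) - Q) \<le> (w-1) * (w^2 * a_n n w)"
  proof -
    have "(w-1) * (w^2 * a_n n w) = w^2 * ((w-1) * a_n n w)" by (simp add: algebra_simps)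
    also have "\<dots> = w^2 * (X - 1)" by (simp add: A_closed X_def)
    also have "\<dots> = X*w^2 - w^2" by (simp add: algebra_simps)
    finally have e1: "(w-1) * (w^2 * a_n n w) = X*w^2 - w^2" .
    have e2: "(w-1) * (X * (w+1) - Q) = X*w^2 - X - (w-1)*Q"
      by (simp add: algebra_simps power2_eq_square)
    have "(w-1)*Q \<ge> 0" using w Qnn by simp
    thus ?thesis using Xge e1 e2 by linarith
  qed
  hence "X * (w+1) - Q \<le> w^2 * a_n n w" using w by simp
  thus ?thesis using eq by simp
qed


lemma F_bound:
  fixes w :: real and n :: nat
  assumes w: "w \<ge> 2" and n: "n \<ge> 1"
  shows "0 \<le> F_n n w \<and> F_n n w \<le> real n / 2 * (w-1) powr (-3/2)"
proof -
  define A where "A = a_n n w"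
  define B where "B = b_n n w"
  define C where "C = c_n n w"
  define D where "D = (real n)^2 * A - 2 * real n * B + C"
  have Apos: "A > 0" unfolding A_def a_n_def using w by (intro sum_pos) auto
  have Cnn: "C \<ge> 0" unfolding C_def c_n_def using w by (intro sum_nonneg) auto
  have CA: "C \<le> (real n)^2 * A"
    unfolding C_def A_def c_n_def a_n_def sum_distrib_left
    using w by (intro sum_mono mult_right_mono) auto
  define m where "m = B / A"
  have "(\<Sum>j=0..n. w^j * (real j - m)^2) = C - 2 * m * B + m^2 * A"
    unfolding C_def B_def A_def c_n_def b_n_0 a_n_def
    by (simp add: power2_diff algebra_simps sum.distrib sum_subtractf sum_distrib_left sum_distrib_right)
  moreover have "(\<Sum>j=0..n. w^j * (real j - m)^2) \<ge> 0" using w by (intro sum_nonneg) auto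
  ultimately have "C - 2 * m * B + m^2 * A \<ge> 0" by simp
  hence "A * (C - 2 * m * B + m^2 * A) \<ge> 0" using Apos by simp
  moreover have "A * (C - 2 * m * B + m^2 * A) = A*C - B^2"
    unfolding m_def using Apos by (simp add: field_simps power2_eq_square)
  ultimately have V: "A*C - B^2 \<ge> 0" by simp
  have AD: "A*C - B^2 \<le> A * D"
  proof -
    have "A * D - (A*C - B^2) = (real n * A - B)^2"
      unfolding D_def by (simp add: algebra_simps power2_eq_square)
    thus ?thesis by (smt (verit) zero_le_power2)
  qed
  have wm: "w - 1 > 0" using w by simp
  have key: "(w-1)^3 * D \<le> w^2 * A"
    unfolding D_def A_def B_def C_def using key_poly[of w n] w n by simp
  define Y where "Y = C * (A*C - B^2) / (4 * w^2 * A^3)"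
  have FY: "F_n n w = sqrt Y"
  proof -
    have "1 / (2 * sqrt w) = sqrt (1 / (4*w))" using w
      by (simp add: real_sqrt_divide real_sqrt_mult)
    hence "F_n n w = sqrt (1/(4*w)) * sqrt (C/A) * sqrt ((A*C - B^2)/(w*A^2))"
      unfolding F_n_def A_def B_def C_def by simp
    also have "\<dots> = sqrt (1/(4*w) * (C/A) * ((A*C - B^2)/(w*A^2)))"
      by (simp only: real_sqrt_mult)
    also have "1/(4*w) * (C/A) * ((A*C - B^2)/(w*A^2)) = Y"
      unfolding Y_def using w Apos by (simp add: field_simps power2_eq_square power3_eq_cube)
    finally show ?thesis .
  qed
  have Ynn: "Y \<ge> 0" unfolding Y_def using Cnn V Apos by simp
  have "Y \<le> ((real n)^2 * A) * (A * D) / (4 * w^2 * A^3)"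
    unfolding Y_def using Apos w by (intro divide_right_mono mult_mono CA AD V) auto
  also have "\<dots> = (real n)^2 * D / (4 * w^2 * A)"
    using Apos by (simp add: field_simps power2_eq_square power3_eq_cube)
  also have "\<dots> \<le> (real n)^2 / (4 * (w-1)^3)"
  proof -
    have "(real n)^2 * D * (4 * (w-1)^3) \<le> (real n)^2 * (4 * w^2 * A)"
    proof -
      have "(real n)^2 * ((w-1)^3 * D) \<le> (real n)^2 * (w^2 * A)"
        using key by (intro mult_left_mono) auto
      thus ?thesis by (simp add: algebra_simps)
    qed
    thus ?thesis using Apos wm w by (simp add: divide_simps mult_ac)
  qed
  finally have Yle: "Y \<le> (real n)^2 / (4 * (w-1)^3)" .
  define g where "g = real n / 2 * (w-1) powr (-3/2)"
  have gnn: "g \<ge> 0" unfolding g_def by simp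
  have "g^2 = (real n)^2 / 4 * ((w-1) powr (-3/2) * (w-1) powr (-3/2))"
    unfolding g_def by (simp add: power2_eq_square)
  also have "(w-1) powr (-3/2) * (w-1) powr (-3/2) = (w-1) powr (-3)"
    by (simp add: powr_add[symmetric])
  also have "(w-1) powr (-3) = 1 / (w-1)^3"
    using wm by (simp add: powr_minus_divide)
  finally have g2: "g^2 = (real n)^2 / (4 * (w-1)^3)" by simp
  have "sqrt Y \<le> sqrt (g^2)" using Yle g2 by simp
  hence "sqrt Y \<le> g" using gnn by simp
  thus ?thesis using FY Ynn g_def by simp
qed


lemma g_int: "((\<lambda>x::real. (x-1) powr (-3/2)) has_integral 2) {2..}"
proof (intro has_integral_to_inf integrable_continuous_interval continuous_intros)
  define G where "G \<equiv> \<lambda>x::real. -2 * (x-1) powr (-1/2)"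
  have "((\<lambda>x. (x-1) powr (-3/2)) has_integral (G y - G 2)) {2..y}" if "y \<ge> 2" for y
    unfolding G_def
    by (intro fundamental_theorem_of_calculus that)
       (auto intro!: derivative_eq_intros
               simp flip: has_real_derivative_iff_has_vector_derivative simp: field_simps)
  then have "\<forall>\<^sub>F y in at_top. integral {2..y} (\<lambda>x. (x-1) powr (-3/2)) = G y - G 2"
    by (meson eventually_at_top_linorderI integral_unique)
  moreover have "((\<lambda>y::real. G y - G 2) \<longlongrightarrow> 2) at_top"
  proof -
    have lim1: "LIM y at_top. (y::real) - 1 :> at_top"
      using filterlim_tendsto_add_at_top[OF tendsto_const[of "-1::real"] filterlim_ident]
      by simp
    have "((\<lambda>y::real. (y-1) powr (-1/2)) \<longlongrightarrow> 0) at_top"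
      by (rule tendsto_neg_powr[OF _ lim1]) simp
    hence "((\<lambda>y::real. -2 * (y-1) powr (-1/2) + 2) \<longlongrightarrow> -2 * 0 + 2) at_top"
      by (intro tendsto_intros)
    thus ?thesis unfolding G_def by simp
  qed
  ultimately 
  show "((\<lambda>y. integral {2..y} (\<lambda>x::real. (x-1) powr (-3/2)))  \<longlongrightarrow> 2) at_top"
    by (simp add: filterlim_cong)
qed auto

theorem lemma3p4:
  fixes n :: nat
  assumes "n \<ge> 1"
  shows "set_integrable lborel {2..} (F_n n)
         \<and> (LINT w:{2..}|lborel. F_n n w) \<le> real n"
proof -
  define g where "g = (\<lambda>x::real. real n / 2 * (x-1) powr (-3/2))"
  have gI: "(g has_integral real n) {2..}"
    unfolding g_def using has_integral_mult_right[OF g_int, of "real n / 2"] by simp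
  have gnn: "\<And>x. x \<in> {2..} \<Longrightarrow> 0 \<le> g x" unfolding g_def by simp
  have "g absolutely_integrable_on {2..}"
    using gI gnn by (intro nonnegative_absolutely_integrable_1) (auto simp: integrable_on_def)
  moreover have gm: "(\<lambda>x. indicator {2..} x *\<^sub>R g x) \<in> borel_measurable lborel"
    unfolding g_def by measurable
  ultimately have gL: "set_integrable lborel {2..} g"
    unfolding set_integrable_def using integrable_completion[OF gm] by simp
  have Fm: "set_borel_measurable lborel {2..} (F_n n)"
    unfolding set_borel_measurable_def F_n_def a_n_def b_n_def c_n_def by measurable
  have FL: "set_integrable lborel {2..} (F_n n)"
    by (rule set_integrable_bound[OF gL Fm])
       (use F_bound[OF _ assms] gnn in \<open>auto simp: g_def\<close>)
  have "(LINT w:{2..}|lborel. F_n n w) \<le> (LINT w:{2..}|lborel. g w)"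
    by (rule set_integral_mono[OF FL gL]) (use F_bound[OF _ assms] in \<open>auto simp: g_def\<close>)
  also have "(LINT w:{2..}|lborel. g w) = integral {2..} g"
    by (rule set_borel_integral_eq_integral(2)[OF gL])
  also have "\<dots> = real n" using gI by (rule integral_unique)
  finally show ?thesis using FL by simp
qed

end
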